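(* Let $G=(V,E,m,w)$ be a weighted graph admitting an intrinsic metric $\rho$ with finite balls and finite jump size $s=\sup_{x\sim y}\rho(x,y)$. Suppose $G$ has polynomial volume growth: there are $x_0\in V$ and constants $\alpha, C$ with $m(B_R(x_0))\le C(1+R)^{\alpha}$ for all $R>0$. Let $k>0$ and $u\in\widetilde{\mathcal{P}}_k(G)$. Then for any $q\in\mathbb{N}$ with $4q>2k+\alpha+2$, $D_t^q u\equiv 0$. In particular, there exist functions $p_i$ on $V$, $0\le i\le q-1$, such that $u(x,t)=\sum_{i=0}^{q-1}p_i(x)\binom{-t}{i}$ for all $x\in V$, $t\in\mathbb{Z}_-$.
   Context: A weighted graph $G=(V,E,m,w)$ consists of a locally finite, simple, undirected, connected graph $(V,E)$, a symmetric edge weight $w:E\to(0,\infty)$, and a vertex weight $m:V\to(0,\infty)$; $m(\Omega)=\sum_{x\in\Omega}m_x$. The Laplacian is $\Delta f(x)=\sum_{y\sim x}\frac{w_{xy}}{m_x}(f(y)-f(x))$. A (pseudo)metric $\rho$ on $V$ is intrinsic if $\sum_{y\sim x}w_{xy}\rho^2(x,y)\le m_x$ for all $x$; $B_R(x)=\{y:\rho(y,x)\le R\}$. $\mathbb{Z}_-=\mathbb{Z}\cap(-\infty,0]$; $D_t u(x,t)=u(x,t)-u(x,t-1)$ and $D_t^q$ is its $q$-fold composition. An ancient solution of the discrete-time heat equation is $u:V\times\mathbb{Z}_-\to\mathbb{R}$ with $D_tu=\Delta u$. $\widetilde{\mathcal{P}}_k(G)$ is the space of such solutions for which there are $x_0\in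 V$ and $C_u$ with $\sup_{B_R(x_0)\times([-R^2,0]\cap\mathbb{Z})}|u|\le C_u(1+R)^k$ for all $R>0$. For $n\in\mathbb{Z}_{\ge0}$, $\binom{n}{i}=\frac{n(n-1)\cdots(n-i+1)}{i!}$ if $0\le i\le n$ and $0$ otherwise. *)

theory Defs
  imports Complex_Main
begin

text \<open>A weighted graph on the vertex type 'a (V = UNIV): adjacency relation E,
 edge weight w (only relevant on edges), vertex weight m.\<close>
definition weighted_graph :: "('a \<Rightarrow> 'a \<Rightarrow> bool) \<Rightarrow> ('a \<Rightarrow> 'a \<Rightarrow> real) \<Rightarrow> ('a \<Rightarrow> real) \<Rightarrow> bool" where
  "weighted_graph E w m \<longleftrightarrow>
     (\<forall>x y. E x y \<longrightarrow> E y x) \<and>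
     (\<forall>x. \<not> E x x) \<and>
     (\<forall>x. finite {y. E x y}) \<and>
     (\<forall>x y. (E\<^sup>*\<^sup>*) x y) \<and>
     (\<forall>x y. E x y \<longrightarrow> w x y > 0 \<and> w x y = w y x) \<and>
     (\<forall>x. m x > 0)"

definition laplacian :: "('a \<Rightarrow> 'a \<Rightarrow> bool) \<Rightarrow> ('a \<Rightarrow> 'a \<Rightarrow> real) \<Rightarrow> ('a \<Rightarrow> real) \<Rightarrow> ('a \<Rightarrow> real) \<Rightarrow> 'a \<Rightarrow> real" where
  "laplacian E w m f x = (\<Sum>y\<in>{y. E x y}. w x y / m x * (f y - f x))"

definition pseudometric :: "('a \<Rightarrow> 'a \<Rightarrow> real) \<Rightarrow> bool" where
  "pseudometric \<rho> \<longleftrightarrow> (\<forall>x y. \<rho> x y \<ge> 0) \<and> (\<forall>x. \<rho> x x = 0) \<and>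
     (\<forall>x y. \<rho> x y = \<rho> y x) \<and> (\<forall>x y z. \<rho> x z \<le> \<rho> x y + \<rho> y z)"

definition intrinsic_metric :: "('a \<Rightarrow> 'a \<Rightarrow> bool) \<Rightarrow> ('a \<Rightarrow> 'a \<Rightarrow> real) \<Rightarrow> ('a \<Rightarrow> real) \<Rightarrow> ('a \<Rightarrow> 'a \<Rightarrow> real) \<Rightarrow> bool" where
  "intrinsic_metric E w m \<rho> \<longleftrightarrow> pseudometric \<rho> \<and>
     (\<forall>x. (\<Sum>y\<in>{y. E x y}. w x y * (\<rho> x y)\<^sup>2) \<le> m x)"

definition ball :: "('a \<Rightarrow> 'a \<Rightarrow> real) \<Rightarrow> 'a \<Rightarrow> real \<Rightarrow> 'a set" where
  "ball \<rho> x R = {y. \<rho> y x \<le> R}"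

definition Dt :: "('a \<Rightarrow> int \<Rightarrow> real) \<Rightarrow> 'a \<Rightarrow> int \<Rightarrow> real" where
  "Dt u x t = u x t - u x (t - 1)"

text \<open>Ancient solution on V \<times> Z_- (values at t > 0 are irrelevant).\<close>
definition ancient_solution :: "('a \<Rightarrow> 'a \<Rightarrow> bool) \<Rightarrow> ('a \<Rightarrow> 'a \<Rightarrow> real) \<Rightarrow> ('a \<Rightarrow> real) \<Rightarrow> ('a \<Rightarrow> int \<Rightarrow> real) \<Rightarrow> bool" where
  "ancient_solution E w m u \<longleftrightarrow>
     (\<forall>x. \<forall>t\<le>0. Dt u x t = laplacian E w m (\<lambda>y. u y t) x)"

definition P_tilde :: "('a \<Rightarrow> 'a \<Rightarrow> bool) \<Rightarrow> ('a \<Rightarrow> 'a \<Rightarrow> real) \<Rightarrow> ('a \<Rightarrow> real) \<Rightarrow> ('a \<Rightarrow> 'a \<Rightarrow> real) \<Rightarrow> real \<Rightarrow> ('a \<Rightarrow> int \<Rightarrow> real) set" where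
  "P_tilde E w m \<rho> k = {u. ancient_solution E w m u \<and>
     (\<exists>x0 C. \<forall>R>0. \<forall>x\<in>ball \<rho> x0 R. \<forall>t::int. - (R\<^sup>2) \<le> real_of_int t \<and> t \<le> 0 \<longrightarrow>
        \<bar>u x t\<bar> \<le> C * (1 + R) powr k)}"

end

theory Submission
  imports Defs
begin

lemma abel1: "(\<Sum>n\<in>{1..T}. real n * (F n - F (n-1))) = real T * F T - (\<Sum>n<T. F n)"
  for F :: "nat \<Rightarrow> real"
proof (induction T)
  case 0 then show ?case by simp
next
  case (Suc T) then show ?case by (simp add: algebra_simps)
qed

lemma abel2: "(\<Sum>n\<in>{1..T}. real n * (real n - 1) * (J (n-1) - J n))
   = (\<Sum>n<T. 2 * real n * J n) - real T * (real T - 1) * J T"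
  for J :: "nat \<Rightarrow> real"
proof (induction T)
  case 0 then show ?case by simp
next
  case (Suc T) then show ?case by (simp add: algebra_simps)
qed

lemma reidx: "a \<le> N \<Longrightarrow> (\<Sum>n\<in>{a..N}. f (int n - int N)) = (\<Sum>t\<in>{int a - int N..0}. f t)"
  by (rule sum.reindex_bij_witness[of _ "\<lambda>t. nat (t + int N)" "\<lambda>n. int n - int N"]) auto

lemma sum_from1: "(\<Sum>n\<le>T. real n * f n) = (\<Sum>n\<in>{1..T}. real n * f n)"
proof -
  have "{..T} = insert 0 {1..T}" by auto
  then show ?thesis by simp
qed

lemma poly_rep:
  "(\<forall>t\<le>0. (Dt ^^ q) h x t = 0) \<Longrightarrow> (\<exists>c::nat\<Rightarrow>real. \<forall>t\<le>0. h x t = (\<Sum>i<q. c i * real (nat (- t) choose i)))"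
proof (induction q arbitrary: h)
  case 0 then show ?case by simp
next
  case (Suc q)
  have "\<forall>t\<le>0. (Dt ^^ q) (Dt h) x t = 0" using Suc.prems by (simp add: funpow_Suc_right del: funpow.simps)
  then obtain c where c: "\<And>t. t \<le> 0 \<Longrightarrow> Dt h x t = (\<Sum>i<q. c i * real (nat (- t) choose i))"
    using Suc.IH by blast
  have hn: "h x (- int n) = h x 0 - (\<Sum>i<q. c i * real (n choose Suc i))" for n
  proof (induction n)
    case 0 then show ?case by simp
  next
    case (Suc n)
    have e: "h x (- int (Suc n)) = h x (- int n - 1)" by (rule arg_cong[where f="h x"]) simp
    have d: "Dt h x (- int n) = h x (- int n) - h x (- int (Suc n))" unfolding e by (simp add: Dt_def)
    have "Dt h x (- int n) = (\<Sum>i<q. c i * real (n choose i))" using c[of "- int n"] by simp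
    then have "h x (- int (Suc n)) = h x 0 - (\<Sum>i<q. c i * real (n choose Suc i)) - (\<Sum>i<q. c i * real (n choose i))"
      using d Suc.IH by linarith
    also have "\<dots> = h x 0 - (\<Sum>i<q. c i * real (Suc n choose Suc i))"
      by (simp add: sum.distrib[symmetric] algebra_simps)
    finally show ?case .
  qed
  define c' where "c' i = (if i = 0 then h x 0 else - c (i - 1))" for i
  show ?case
  proof (intro exI allI impI)
    fix t :: int assume t: "t \<le> 0"
    define n where "n = nat (- t)"
    have tn: "t = - int n" using t n_def by simp
    have "(\<Sum>i<Suc q. c' i * real (n choose i)) = c' 0 * real (n choose 0) + (\<Sum>i<q. c' (Suc i) * real (n choose Suc i))"
      by (rule sum.lessThan_Suc_shift)
    also have "\<dots> = h x 0 - (\<Sum>i<q. c i * real (n choose Suc i))"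
      by (simp add: c'_def sum_negf)
    finally show "h x t = (\<Sum>i<Suc q. c' i * real (nat (- t) choose i))"
      unfolding n_def[symmetric] using hn[of n] tn by simp
  qed
qed

lemma powr_bound1:
  fixes n c \<alpha> :: real assumes "1 \<le> n" "1 \<le> c"
  shows "(1 + c * n) powr \<alpha> \<le> max 1 ((1 + c) powr \<alpha>) * n powr \<alpha>"
proof (cases "0 \<le> \<alpha>")
  case True
  have "(1 + c * n) powr \<alpha> \<le> ((1 + c) * n) powr \<alpha>"
    using assms True by (intro powr_mono2) (auto simp: algebra_simps)
  also have "\<dots> = (1 + c) powr \<alpha> * n powr \<alpha>" using assms by (simp add: powr_mult)
  also have "\<dots> \<le> max 1 ((1 + c) powr \<alpha>) * n powr \<alpha>" by (intro mult_right_mono) auto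
  finally show ?thesis .
next
  case False
  have "(1 + c * n) powr \<alpha> \<le> n powr \<alpha>"
  proof (intro powr_mono2')
    have "1 * n \<le> c * n" using assms by (intro mult_right_mono) auto
    then show "n \<le> 1 + c * n" using assms by linarith
  qed (use assms False in auto)
  also have "\<dots> \<le> max 1 ((1 + c) powr \<alpha>) * n powr \<alpha>"
    using mult_right_mono[of 1 "max 1 ((1 + c) powr \<alpha>)" "n powr \<alpha>"] by simp
  finally show ?thesis .
qed

lemma powr_bound2:
  fixes n c d k :: real assumes "1 \<le> n" "0 \<le> c" "0 \<le> d" "0 \<le> k"
  shows "(1 + c * n + d) powr k \<le> (1 + c + d) powr k * n powr k"
proof -
  have "(1 + c * n + d) powr k \<le> ((1 + c + d) * n) powr k"
  proof (intro powr_mono2)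
    have "d \<le> d * n" using assms mult_left_mono[of 1 n d] by simp
    then show "1 + c * n + d \<le> (1 + c + d) * n" using assms by (simp add: algebra_simps)
  qed (use assms in auto)
  also have "\<dots> = (1 + c + d) powr k * n powr k" using assms by (simp add: powr_mult)
  finally show ?thesis .
qed

locale wg =
  fixes E :: "'a \<Rightarrow> 'a \<Rightarrow> bool" and w :: "'a \<Rightarrow> 'a \<Rightarrow> real" and m :: "'a \<Rightarrow> real"
    and \<rho> :: "'a \<Rightarrow> 'a \<Rightarrow> real" and x0 :: 'a and s :: real
  assumes symE: "E x y \<Longrightarrow> E y x" and finN: "finite {y. E x y}"
    and wpos: "E x y \<Longrightarrow> 0 < w x y" and wsym: "E x y \<Longrightarrow> w x y = w y x"
    and mpos: "0 < m x"
    and rnn: "0 \<le> \<rho> x y" and rrefl: "\<rho> x x = 0" and rsym: "\<rho> x y = \<rho> y x" and rtri: "\<rho> x z \<le> \<rho> x y + \<rho> y z"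
    and intr: "(\<Sum>y\<in>{y. E x y}. w x y * (\<rho> x y)\<^sup>2) \<le> m x"
    and finB: "finite (ball \<rho> x r)"
    and s0: "0 \<le> s" and jump: "E x y \<Longrightarrow> \<rho> x y \<le> s"
begin

abbreviation "B r \<equiv> ball \<rho> x0 r"

definition DS :: "'a set \<Rightarrow> ('a \<Rightarrow> 'a \<Rightarrow> real) \<Rightarrow> real" where
  "DS S f = (\<Sum>x\<in>S. \<Sum>y\<in>S. if E x y then w x y * f x y else 0)"

lemma DS_swap: "DS S f = DS S (\<lambda>x y. f y x)"
proof -
  have "DS S f = (\<Sum>y\<in>S. \<Sum>x\<in>S. if E x y then w x y * f x y else 0)"
    unfolding DS_def by (rule sum.swap)
  also have "\<dots> = DS S (\<lambda>x y. f y x)"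
    unfolding DS_def
    by (intro sum.cong refl) (auto simp: wsym symE)
  finally show ?thesis .
qed

lemma DS_mono:
  assumes "\<And>x y. x \<in> S \<Longrightarrow> y \<in> S \<Longrightarrow> E x y \<Longrightarrow> f x y \<le> g x y"
  shows "DS S f \<le> DS S g"
  unfolding DS_def
  by (intro sum_mono) (auto intro!: mult_left_mono assms simp: wpos less_imp_le)

lemma DS_nonneg:
  assumes "\<And>x y. x \<in> S \<Longrightarrow> y \<in> S \<Longrightarrow> E x y \<Longrightarrow> 0 \<le> f x y"
  shows "0 \<le> DS S f"
  unfolding DS_def by (intro sum_nonneg) (auto intro!: mult_nonneg_nonneg assms simp: wpos less_imp_le)

lemma DS_add: "DS S (\<lambda>x y. f x y + g x y) = DS S f + DS S g"
  unfolding DS_def by (simp add: sum.distrib[symmetric] algebra_simps if_distrib cong: if_cong)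

lemma DS_cmult: "DS S (\<lambda>x y. c * f x y) = c * DS S f"
  unfolding DS_def by (simp add: sum_distrib_left algebra_simps if_distrib cong: if_cong)

lemma DS_diff: "DS S (\<lambda>x y. f x y - g x y) = DS S f - DS S g"
  unfolding DS_def by (simp add: sum_subtractf[symmetric] algebra_simps if_distrib cong: if_cong)

lemma lap_S:
  assumes "finite S" "{y. E x y} \<subseteq> S"
  shows "m x * laplacian E w m f x = (\<Sum>y\<in>S. if E x y then w x y * (f y - f x) else 0)"
proof -
  have "m x * laplacian E w m f x = (\<Sum>y\<in>{y. E x y}. w x y * (f y - f x))"
    unfolding laplacian_def sum_distrib_left using mpos[of x]
    by (intro sum.cong refl) (simp add: field_simps)
  also have "\<dots> = (\<Sum>y\<in>S \<inter> {y. E x y}. w x y * (f y - f x))"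
    using assms by (simp add: Int_absorb1)
  also have "\<dots> = (\<Sum>y\<in>S. if E x y then w x y * (f y - f x) else 0)"
    using assms(1) by (simp add: sum.inter_restrict)
  finally show ?thesis .
qed

lemma green:
  assumes S: "finite S" and g: "\<And>x. g x \<noteq> 0 \<Longrightarrow> x \<in> S \<and> {y. E x y} \<subseteq> S"
  shows "(\<Sum>x\<in>S. g x * (m x * laplacian E w m f x)) = - (1/2) * DS S (\<lambda>x y. (g y - g x) * (f y - f x))"
proof -
  have "(\<Sum>x\<in>S. g x * (m x * laplacian E w m f x)) = DS S (\<lambda>x y. g x * (f y - f x))"
    unfolding DS_def
  proof (intro sum.cong refl)
    fix x assume "x \<in> S"
    show "g x * (m x * laplacian E w m f x) = (\<Sum>y\<in>S. if E x y then w x y * (g x * (f y - f x)) else 0)"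
    proof (cases "g x = 0")
      case True thus ?thesis by (simp add: True cong: if_cong)
    next
      case False
      then have "{y. E x y} \<subseteq> S" using g by blast
      then show ?thesis using lap_S[OF S, of x f]
        by (simp add: sum_distrib_left algebra_simps if_distrib cong: if_cong)
    qed
  qed
  moreover have "DS S (\<lambda>x y. g x * (f y - f x)) = DS S (\<lambda>x y. g y * (f x - f y))"
    by (rule DS_swap)
  ultimately have "(\<Sum>x\<in>S. g x * (m x * laplacian E w m f x)) =
      (1/2) * DS S (\<lambda>x y. g x * (f y - f x) + g y * (f x - f y))"
    by (simp add: DS_add)
  also have "\<dots> = - (1/2) * DS S (\<lambda>x y. (g y - g x) * (f y - f x))"
    using DS_cmult[of S "-1" "\<lambda>x y. (g y - g x) * (f y - f x)"]
    by (simp add: algebra_simps)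
  finally show ?thesis .
qed

definition cut :: "real \<Rightarrow> real \<Rightarrow> 'a \<Rightarrow> real" where
  "cut r L x = max 0 (min 1 ((r + L - \<rho> x x0) / L))"

lemma cut_nn: "0 \<le> cut r L x" unfolding cut_def by simp
lemma cut_le1: "cut r L x \<le> 1" unfolding cut_def by simp
lemma cut_in: "0 < L \<Longrightarrow> x \<in> B r \<Longrightarrow> cut r L x = 1"
  unfolding cut_def ball_def by (simp add: field_simps)
lemma cut_out: "0 < L \<Longrightarrow> x \<notin> B (r+L) \<Longrightarrow> cut r L x = 0"
  unfolding cut_def ball_def by (simp add: field_simps)

lemma clamp_lip: "\<bar>max 0 (min 1 a) - max 0 (min 1 b)\<bar> \<le> \<bar>a - b\<bar>" for a b :: real
  unfolding max_def min_def by (auto simp: abs_if)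

lemma cut_lip:
  assumes "0 < L" shows "\<bar>cut r L y - cut r L x\<bar> \<le> \<rho> x y / L"
proof -
  have "\<bar>cut r L y - cut r L x\<bar> \<le> \<bar>(r + L - \<rho> y x0) / L - (r + L - \<rho> x x0) / L\<bar>"
    unfolding cut_def by (rule clamp_lip)
  also have "\<dots> = \<bar>\<rho> x x0 - \<rho> y x0\<bar> / L"
  proof -
    have "(r + L - \<rho> y x0) / L - (r + L - \<rho> x x0) / L = (\<rho> x x0 - \<rho> y x0) / L"
      by (simp add: diff_divide_distrib)
    thus ?thesis using assms by (simp add: abs_divide)
  qed
  also have "\<dots> \<le> \<rho> x y / L"
  proof -
    have "\<rho> x x0 \<le> \<rho> x y + \<rho> y x0" by (rule rtri)
    moreover have "\<rho> y x0 \<le> \<rho> y x + \<rho> x x0" by (rule rtri)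
    ultimately have "\<bar>\<rho> x x0 - \<rho> y x0\<bar> \<le> \<rho> x y" using rsym[of y x] by linarith
    thus ?thesis using assms by (simp add: divide_right_mono)
  qed
  finally show ?thesis .
qed

lemma ball_mono: "a \<le> b \<Longrightarrow> B a \<subseteq> B b"
  unfolding ball_def by auto

lemma edge_ball: "E x y \<Longrightarrow> x \<in> B a \<Longrightarrow> y \<in> B (a + s)"
proof -
  assume a: "E x y" "x \<in> B a"
  have "\<rho> y x0 \<le> \<rho> y x + \<rho> x x0" by (rule rtri)
  moreover have "\<rho> y x = \<rho> x y" by (rule rsym)
  moreover have "\<rho> x y \<le> s" using a(1) by (rule jump)
  moreover have "\<rho> x x0 \<le> a" using a unfolding ball_def by simp
  ultimately show ?thesis unfolding ball_def by simp
qed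

lemma nbhd_sub: "B (a + s) \<subseteq> S \<Longrightarrow> x \<in> B a \<Longrightarrow> {y. E x y} \<subseteq> S"
  using edge_ball by blast

lemma cut_edge:
  assumes "0 < L" "E x y" "cut r L y \<noteq> cut r L x" shows "x \<in> B (r + L + s)"
proof (rule ccontr)
  assume a: "x \<notin> B (r + L + s)"
  then have "x \<notin> B (r + L)" using ball_mono[of "r+L" "r+L+s"] s0 by auto
  moreover have "y \<notin> B (r + L)"
    using a edge_ball[of y x "r+L"] symE[OF assms(2)] by auto
  ultimately show False using assms cut_out by auto
qed

lemma DS_lip:
  assumes S: "finite S" and L: "0 < L" and lip: "\<And>x y. \<bar>\<phi> y - \<phi> x\<bar> \<le> \<rho> x y / L"
    and h: "\<And>x. 0 \<le> h x"
  shows "DS S (\<lambda>x y. (\<phi> y - \<phi> x)\<^sup>2 * h x) \<le> (1 / L\<^sup>2) * (\<Sum>x\<in>S. h x * m x)"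
proof -
  have "DS S (\<lambda>x y. (\<phi> y - \<phi> x)\<^sup>2 * h x) = (\<Sum>x\<in>S. h x * (\<Sum>y\<in>S. if E x y then w x y * (\<phi> y - \<phi> x)\<^sup>2 else 0))"
    unfolding DS_def by (simp add: sum_distrib_left algebra_simps if_distrib cong: if_cong)
  also have "\<dots> \<le> (\<Sum>x\<in>S. h x * (m x / L\<^sup>2))"
  proof (intro sum_mono mult_left_mono h)
    fix x
    have "(\<Sum>y\<in>S. if E x y then w x y * (\<phi> y - \<phi> x)\<^sup>2 else 0)
        \<le> (\<Sum>y\<in>S. if E x y then w x y * (\<rho> x y)\<^sup>2 / L\<^sup>2 else 0)"
    proof (intro sum_mono)
      fix y
      have "(\<phi> y - \<phi> x)\<^sup>2 \<le> (\<rho> x y / L)\<^sup>2"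
        using lip[of y x] by (metis abs_le_square_iff abs_of_nonneg L divide_nonneg_pos less_imp_le rnn)
      then show "(if E x y then w x y * (\<phi> y - \<phi> x)\<^sup>2 else 0) \<le> (if E x y then w x y * (\<rho> x y)\<^sup>2 / L\<^sup>2 else 0)"
        using wpos[of x y] by (auto simp: power_divide intro: mult_left_mono[where c="w x y", simplified mult.assoc] 
              simp flip: times_divide_eq_right)
    qed
    also have "\<dots> = (\<Sum>y\<in>S. if E x y then w x y * (\<rho> x y)\<^sup>2 else 0) / L\<^sup>2"
      unfolding sum_divide_distrib by (intro sum.cong) auto
    also have "\<dots> = (\<Sum>y\<in>S \<inter> {y. E x y}. w x y * (\<rho> x y)\<^sup>2) / L\<^sup>2"
      using S by (simp add: sum.inter_restrict)
    also have "\<dots> \<le> (\<Sum>y\<in>{y. E x y}. w x y * (\<rho> x y)\<^sup>2) / L\<^sup>2"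
      by (intro divide_right_mono sum_mono2 finN) (auto intro!: mult_nonneg_nonneg simp: less_imp_le[OF wpos])
    also have "\<dots> \<le> m x / L\<^sup>2"
      by (intro divide_right_mono intr) simp
    finally show "(\<Sum>y\<in>S. if E x y then w x y * (\<phi> y - \<phi> x)\<^sup>2 else 0) \<le> m x / L\<^sup>2" .
  qed
  also have "\<dots> = (1 / L\<^sup>2) * (\<Sum>x\<in>S. h x * m x)"
    by (simp add: sum_distrib_left field_simps)
  finally show ?thesis .
qed

lemma pw1: "(a\<^sup>2 + b\<^sup>2) / 4 * (q - p)\<^sup>2 - (b - a)\<^sup>2 * (p\<^sup>2 + q\<^sup>2) \<le> (b\<^sup>2 * q - a\<^sup>2 * p) * (q - p)"
  for a b p q :: real
proof -
  have "(b\<^sup>2 * q - a\<^sup>2 * p) * (q - p) - ((a\<^sup>2 + b\<^sup>2) / 4 * (q - p)\<^sup>2 - (b - a)\<^sup>2 * (p\<^sup>2 + q\<^sup>2))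
     = ((a + b) * (q - p) / 2 + (b - a) * (q + p))\<^sup>2 / 2 + 5 / 8 * (a - b)\<^sup>2 * (q - p)\<^sup>2"
    by (simp add: power2_eq_square field_simps)
  moreover have "0 \<le> ((a + b) * (q - p) / 2 + (b - a) * (q + p))\<^sup>2 / 2 + 5 / 8 * (a - b)\<^sup>2 * (q - p)\<^sup>2"
    by simp
  ultimately show ?thesis by linarith
qed

lemma energy1:
  assumes S: "finite S" "B (r+L+s) \<subseteq> S" and L: "0 < L"
    and eq: "\<And>x. b x - a x = laplacian E w m b x"
  shows "(\<Sum>x\<in>S. m x * (cut r L x)\<^sup>2 * (b x)\<^sup>2) - (\<Sum>x\<in>S. m x * (cut r L x)\<^sup>2 * (a x)\<^sup>2)
     + (1/4) * DS S (\<lambda>x y. if x \<in> B r then (b y - b x)\<^sup>2 else 0)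
     \<le> (2/L\<^sup>2) * (\<Sum>x\<in>S. if x \<in> B (r+L+s) then m x * (b x)\<^sup>2 else 0)"
proof -
  define \<phi> where "\<phi> = cut r L"
  define g where "g x = (\<phi> x)\<^sup>2 * b x" for x
  define B' where "B' = B (r+L+s)"
  have g: "g x \<noteq> 0 \<Longrightarrow> x \<in> S \<and> {y. E x y} \<subseteq> S" for x
  proof -
    assume "g x \<noteq> 0" then have "\<phi> x \<noteq> 0" by (auto simp: g_def)
    then have "x \<in> B (r+L)" using cut_out[OF L] \<phi>_def by blast
    then show ?thesis using S(2) nbhd_sub[of "r+L" S x] ball_mono[of "r+L" "r+L+s"] s0 by auto
  qed
  have 1: "(\<Sum>x\<in>S. m x * (\<phi> x)\<^sup>2 * (b x)\<^sup>2) - (\<Sum>x\<in>S. m x * (\<phi> x)\<^sup>2 * (a x)\<^sup>2)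
      \<le> 2 * (\<Sum>x\<in>S. g x * (m x * laplacian E w m b x))"
  proof -
    have "(\<Sum>x\<in>S. m x * (\<phi> x)\<^sup>2 * (b x)\<^sup>2) - (\<Sum>x\<in>S. m x * (\<phi> x)\<^sup>2 * (a x)\<^sup>2)
        = (\<Sum>x\<in>S. m x * (\<phi> x)\<^sup>2 * ((b x)\<^sup>2 - (a x)\<^sup>2))"
      by (simp add: sum_subtractf[symmetric] algebra_simps)
    also have "\<dots> \<le> (\<Sum>x\<in>S. 2 * (g x * (m x * laplacian E w m b x)))"
    proof (intro sum_mono)
      fix x
      have "m x * (\<phi> x)\<^sup>2 * ((b x)\<^sup>2 - (a x)\<^sup>2) = 2 * (g x * (m x * (b x - a x))) - m x * (\<phi> x)\<^sup>2 * (b x - a x)\<^sup>2"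
        by (simp add: g_def power2_eq_square algebra_simps)
      moreover have "0 \<le> m x * (\<phi> x)\<^sup>2 * (b x - a x)\<^sup>2" using mpos[of x] by simp
      ultimately show "m x * (\<phi> x)\<^sup>2 * ((b x)\<^sup>2 - (a x)\<^sup>2) \<le> 2 * (g x * (m x * laplacian E w m b x))"
        using eq[of x] by simp
    qed
    also have "\<dots> = 2 * (\<Sum>x\<in>S. g x * (m x * laplacian E w m b x))"
      by (simp add: sum_distrib_left)
    finally show ?thesis .
  qed
  have 2: "(\<Sum>x\<in>S. g x * (m x * laplacian E w m b x)) = -(1/2) * DS S (\<lambda>x y. (g y - g x) * (b y - b x))"
    by (rule green[OF S(1) g])
  define A where "A x y = (if x \<in> B r then (b y - b x)\<^sup>2 else 0)" for x y
  define C1 where "C1 x y = (\<phi> y - \<phi> x)\<^sup>2 * (if x \<in> B' then (b x)\<^sup>2 else 0)" for x y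
  define C2 where "C2 x y = (\<phi> x - \<phi> y)\<^sup>2 * (if y \<in> B' then (b y)\<^sup>2 else 0)" for x y
  have 3: "DS S (\<lambda>x y. (1/4) * A x y - C1 x y - C2 x y) \<le> DS S (\<lambda>x y. (g y - g x) * (b y - b x))"
  proof (rule DS_mono)
    fix x y assume "x \<in> S" "y \<in> S" "E x y"
    have a1: "(1/4) * A x y \<le> ((\<phi> x)\<^sup>2 + (\<phi> y)\<^sup>2) / 4 * (b y - b x)\<^sup>2"
    proof (cases "x \<in> B r")
      case True
      then have "\<phi> x = 1" using cut_in[OF L] \<phi>_def by simp
      then show ?thesis using True mult_right_mono[of 1 "1 + (\<phi> y)\<^sup>2" "(b y - b x)\<^sup>2"] by (simp add: A_def)
    qed (simp add: A_def)
    have a2: "C1 x y = (\<phi> y - \<phi> x)\<^sup>2 * (b x)\<^sup>2"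
      using cut_edge[OF L \<open>E x y\<close>, of r] by (cases "\<phi> y = \<phi> x") (auto simp: \<phi>_def B'_def C1_def)
    have a3: "C2 x y = (\<phi> y - \<phi> x)\<^sup>2 * (b y)\<^sup>2"
      using cut_edge[OF L symE[OF \<open>E x y\<close>], of r]
      by (cases "\<phi> y = \<phi> x") (auto simp: \<phi>_def B'_def C2_def power2_commute)
    have pw: "((\<phi> x)\<^sup>2 + (\<phi> y)\<^sup>2) / 4 * (b y - b x)\<^sup>2 - (\<phi> y - \<phi> x)\<^sup>2 * ((b x)\<^sup>2 + (b y)\<^sup>2)
        \<le> (g y - g x) * (b y - b x)"
      unfolding g_def by (rule pw1)
    have e: "(\<phi> y - \<phi> x)\<^sup>2 * ((b x)\<^sup>2 + (b y)\<^sup>2) = C1 x y + C2 x y"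
      using a2 a3 by (simp add: distrib_left)
    show "(1/4) * A x y - C1 x y - C2 x y \<le> (g y - g x) * (b y - b x)"
      using a1 e pw by linarith
  qed
  have 4: "DS S (\<lambda>x y. (1/4) * A x y - C1 x y - C2 x y) = (1/4) * DS S A - DS S C1 - DS S C2"
    by (simp only: DS_diff DS_cmult)
  have 5: "DS S C2 = DS S C1"
  proof -
    have "C1 = (\<lambda>x y. C2 y x)" by (auto simp: C1_def C2_def fun_eq_iff)
    then show ?thesis using DS_swap[of S C2] by simp
  qed
  have 6: "DS S C1 \<le> (1 / L\<^sup>2) * (\<Sum>x\<in>S. (if x \<in> B' then (b x)\<^sup>2 else 0) * m x)"
    unfolding C1_def \<phi>_def by (rule DS_lip[OF S(1) L cut_lip[OF L]]) simp
  have 7: "(\<Sum>x\<in>S. (if x \<in> B' then (b x)\<^sup>2 else 0) * m x) = (\<Sum>x\<in>S. if x \<in> B (r+L+s) then m x * (b x)\<^sup>2 else 0)"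
    by (intro sum.cong) (auto simp: B'_def)
  show ?thesis
    using 1 2 3 4 5 6 7 unfolding \<phi>_def[symmetric] A_def[abs_def]
    by (simp add: field_simps)
qed

lemma young: "0 < L \<Longrightarrow> - (L\<^sup>2 / 4 * X\<^sup>2 + Y\<^sup>2 / L\<^sup>2) \<le> X * Y" for L X Y :: real
proof -
  assume L: "0 < L"
  have "0 \<le> (L * X / 2 + Y / L)\<^sup>2" by simp
  also have "(L * X / 2 + Y / L)\<^sup>2 = L\<^sup>2 / 4 * X\<^sup>2 + Y\<^sup>2 / L\<^sup>2 + X * Y"
    using L by (simp add: power2_eq_square field_simps)
  finally show ?thesis by linarith
qed

lemma pw2:
  fixes fx fy ax ay bx by' L :: real
  assumes "0 \<le> fx" "0 \<le> fy" "0 < L"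
  shows "fx * fy * ((by' - bx)\<^sup>2 - (ay - ax)\<^sup>2) / 2
         - L\<^sup>2 / 2 * ((fy - fx)\<^sup>2 * (fx\<^sup>2 * (bx - ax)\<^sup>2 + fy\<^sup>2 * (by' - ay)\<^sup>2))
         - (if fy = fx then 0 else (by' - bx)\<^sup>2 / L\<^sup>2)
       \<le> (fy\<^sup>2 * (by' - ay) - fx\<^sup>2 * (bx - ax)) * (by' - bx)"
proof -
  define vx vy d e where "vx = bx - ax" and "vy = by' - ay" and "d = by' - bx" and "e = ay - ax"
  have id: "(fy\<^sup>2 * vy - fx\<^sup>2 * vx) * d = fx * fy * (d * (d - e)) + (fy - fx) * (fy * vy + fx * vx) * d"
    unfolding vx_def vy_def d_def e_def by (simp add: power2_eq_square algebra_simps)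
  have t1: "fx * fy * (d\<^sup>2 - e\<^sup>2) / 2 \<le> fx * fy * (d * (d - e))"
  proof -
    have "fx * fy * (d * (d - e)) - fx * fy * (d\<^sup>2 - e\<^sup>2) / 2 = fx * fy * ((d - e)\<^sup>2 / 2)"
      by (simp add: power2_eq_square field_simps)
    moreover have "0 \<le> fx * fy * ((d - e)\<^sup>2 / 2)" using assms by simp
    ultimately show ?thesis by linarith
  qed
  have t2: "- L\<^sup>2 / 2 * ((fy - fx)\<^sup>2 * (fx\<^sup>2 * vx\<^sup>2 + fy\<^sup>2 * vy\<^sup>2)) - (if fy = fx then 0 else d\<^sup>2 / L\<^sup>2)
      \<le> (fy - fx) * (fy * vy + fx * vx) * d"
  proof (cases "fy = fx")
    case True
    have "0 \<le> L\<^sup>2 / 2 * ((fy - fx)\<^sup>2 * (fx\<^sup>2 * vx\<^sup>2 + fy\<^sup>2 * vy\<^sup>2))" by simp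
    then show ?thesis using True by simp
  next
    case False
    have y: "- (L\<^sup>2 / 4 * ((fy - fx) * (fy * vy + fx * vx))\<^sup>2 + d\<^sup>2 / L\<^sup>2) \<le> (fy - fx) * (fy * vy + fx * vx) * d"
      using young[OF assms(3)] by blast
    have "((fy - fx) * (fy * vy + fx * vx))\<^sup>2 \<le> 2 * ((fy - fx)\<^sup>2 * (fx\<^sup>2 * vx\<^sup>2 + fy\<^sup>2 * vy\<^sup>2))"
    proof -
      have "2 * ((fy - fx)\<^sup>2 * (fx\<^sup>2 * vx\<^sup>2 + fy\<^sup>2 * vy\<^sup>2)) - ((fy - fx) * (fy * vy + fx * vx))\<^sup>2
          = (fy - fx)\<^sup>2 * (fy * vy - fx * vx)\<^sup>2"
        by (simp add: power2_eq_square algebra_simps)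
      moreover have "0 \<le> (fy - fx)\<^sup>2 * (fy * vy - fx * vx)\<^sup>2" by simp
      ultimately show ?thesis by linarith
    qed
    then have "L\<^sup>2 / 4 * ((fy - fx) * (fy * vy + fx * vx))\<^sup>2 \<le> L\<^sup>2 / 4 * (2 * ((fy - fx)\<^sup>2 * (fx\<^sup>2 * vx\<^sup>2 + fy\<^sup>2 * vy\<^sup>2)))"
      by (rule mult_left_mono) simp
    then have "L\<^sup>2 / 4 * ((fy - fx) * (fy * vy + fx * vx))\<^sup>2 \<le> L\<^sup>2 / 2 * ((fy - fx)\<^sup>2 * (fx\<^sup>2 * vx\<^sup>2 + fy\<^sup>2 * vy\<^sup>2))"
      by simp
    then show ?thesis using y False by simp
  qed
  show ?thesis using id t1 t2 unfolding vx_def[symmetric] vy_def[symmetric] d_def[symmetric] e_def[symmetric]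
    by linarith
qed

lemma energy2:
  assumes S: "finite S" "B (r+L+s) \<subseteq> S" and L: "0 < L"
    and eq: "\<And>x. b x - a x = laplacian E w m b x"
  shows "(\<Sum>x\<in>S. m x * (cut r L x)\<^sup>2 * (b x - a x)\<^sup>2)
     \<le> (1/2) * (DS S (\<lambda>x y. cut r L x * cut r L y * (a y - a x)\<^sup>2) - DS S (\<lambda>x y. cut r L x * cut r L y * (b y - b x)\<^sup>2))
       + (1/L\<^sup>2) * DS S (\<lambda>x y. if x \<in> B (r+L+s) then (b y - b x)\<^sup>2 else 0)"
proof -
  define \<phi> where "\<phi> = cut r L"
  define v where "v x = b x - a x" for x
  define g where "g x = (\<phi> x)\<^sup>2 * v x" for x
  define B' where "B' = B (r+L+s)"
  define H where "H = (\<Sum>x\<in>S. m x * (\<phi> x)\<^sup>2 * (v x)\<^sup>2)"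
  have g: "g x \<noteq> 0 \<Longrightarrow> x \<in> S \<and> {y. E x y} \<subseteq> S" for x
  proof -
    assume "g x \<noteq> 0" then have "\<phi> x \<noteq> 0" by (auto simp: g_def)
    then have "x \<in> B (r+L)" using cut_out[OF L] \<phi>_def by blast
    then show ?thesis using S(2) nbhd_sub[of "r+L" S x] ball_mono[of "r+L" "r+L+s"] s0 by auto
  qed
  have 1: "H = (\<Sum>x\<in>S. g x * (m x * laplacian E w m b x))"
    unfolding H_def by (intro sum.cong refl) (simp add: g_def v_def eq[symmetric] power2_eq_square algebra_simps)
  have 2: "(\<Sum>x\<in>S. g x * (m x * laplacian E w m b x)) = -(1/2) * DS S (\<lambda>x y. (g y - g x) * (b y - b x))"
    by (rule green[OF S(1) g])
  define Ja where "Ja x y = \<phi> x * \<phi> y * (a y - a x)\<^sup>2" for x y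
  define Jb where "Jb x y = \<phi> x * \<phi> y * (b y - b x)\<^sup>2" for x y
  define K1 where "K1 x y = (\<phi> y - \<phi> x)\<^sup>2 * ((\<phi> x)\<^sup>2 * (v x)\<^sup>2)" for x y
  define K2 where "K2 x y = (\<phi> x - \<phi> y)\<^sup>2 * ((\<phi> y)\<^sup>2 * (v y)\<^sup>2)" for x y
  define R where "R x y = (if x \<in> B' then (b y - b x)\<^sup>2 else 0)" for x y
  have 3: "DS S (\<lambda>x y. (1/2) * Jb x y - (1/2) * Ja x y - (L\<^sup>2/2) * K1 x y - (L\<^sup>2/2) * K2 x y - (1/L\<^sup>2) * R x y)
      \<le> DS S (\<lambda>x y. (g y - g x) * (b y - b x))"
  proof (rule DS_mono)
    fix x y assume "x \<in> S" "y \<in> S" "E x y"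
    have p: "\<phi> x * \<phi> y * ((b y - b x)\<^sup>2 - (a y - a x)\<^sup>2) / 2
         - L\<^sup>2 / 2 * ((\<phi> y - \<phi> x)\<^sup>2 * ((\<phi> x)\<^sup>2 * (b x - a x)\<^sup>2 + (\<phi> y)\<^sup>2 * (b y - a y)\<^sup>2))
         - (if \<phi> y = \<phi> x then 0 else (b y - b x)\<^sup>2 / L\<^sup>2)
       \<le> ((\<phi> y)\<^sup>2 * (b y - a y) - (\<phi> x)\<^sup>2 * (b x - a x)) * (b y - b x)"
      by (rule pw2) (auto simp: \<phi>_def cut_nn L)
    have r: "(if \<phi> y = \<phi> x then 0 else (b y - b x)\<^sup>2 / L\<^sup>2) \<le> (1/L\<^sup>2) * R x y"
    proof (cases "\<phi> y = \<phi> x")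
      case True then show ?thesis by (simp add: R_def)
    next
      case False
      then have "x \<in> B'" using cut_edge[OF L \<open>E x y\<close>, of r] by (simp add: \<phi>_def B'_def)
      then show ?thesis using False by (simp add: R_def)
    qed
    have e1: "\<phi> x * \<phi> y * ((b y - b x)\<^sup>2 - (a y - a x)\<^sup>2) / 2 = (1/2) * Jb x y - (1/2) * Ja x y"
      by (simp add: Ja_def Jb_def field_simps)
    have e2: "L\<^sup>2 / 2 * ((\<phi> y - \<phi> x)\<^sup>2 * ((\<phi> x)\<^sup>2 * (b x - a x)\<^sup>2 + (\<phi> y)\<^sup>2 * (b y - a y)\<^sup>2))
        = (L\<^sup>2/2) * K1 x y + (L\<^sup>2/2) * K2 x y"
      by (simp add: K1_def K2_def v_def power2_commute[of "\<phi> x"] algebra_simps)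
    have e3: "((\<phi> y)\<^sup>2 * (b y - a y) - (\<phi> x)\<^sup>2 * (b x - a x)) * (b y - b x) = (g y - g x) * (b y - b x)"
      by (simp add: g_def v_def)
    show "(1/2) * Jb x y - (1/2) * Ja x y - (L\<^sup>2/2) * K1 x y - (L\<^sup>2/2) * K2 x y - (1/L\<^sup>2) * R x y
      \<le> (g y - g x) * (b y - b x)"
      using p r e1 e2 e3 by linarith
  qed
  have 4: "DS S (\<lambda>x y. (1/2) * Jb x y - (1/2) * Ja x y - (L\<^sup>2/2) * K1 x y - (L\<^sup>2/2) * K2 x y - (1/L\<^sup>2) * R x y)
     = (1/2) * DS S Jb - (1/2) * DS S Ja - (L\<^sup>2/2) * DS S K1 - (L\<^sup>2/2) * DS S K2 - (1/L\<^sup>2) * DS S R"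
    by (simp only: DS_diff DS_cmult)
  have 5: "DS S K2 = DS S K1"
  proof -
    have "K1 = (\<lambda>x y. K2 y x)" by (auto simp: K1_def K2_def fun_eq_iff)
    then show ?thesis using DS_swap[of S K2] by simp
  qed
  have 6: "DS S K1 \<le> (1 / L\<^sup>2) * (\<Sum>x\<in>S. ((\<phi> x)\<^sup>2 * (v x)\<^sup>2) * m x)"
    unfolding K1_def \<phi>_def by (rule DS_lip[OF S(1) L cut_lip[OF L]]) simp
  have 7: "(\<Sum>x\<in>S. ((\<phi> x)\<^sup>2 * (v x)\<^sup>2) * m x) = H"
    unfolding H_def by (intro sum.cong) auto
  have 8: "(L\<^sup>2/2) * DS S K1 \<le> H / 2"
  proof -
    have "(L\<^sup>2/2) * DS S K1 \<le> (L\<^sup>2/2) * ((1 / L\<^sup>2) * H)"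
      using 6 7 by (intro mult_left_mono) auto
    also have "\<dots> = H / 2" using L by simp
    finally show ?thesis .
  qed
  define k1 where "k1 = (L\<^sup>2/2) * DS S K1"
  define rr where "rr = (1/L\<^sup>2) * DS S R"
  define X where "X = DS S (\<lambda>x y. (g y - g x) * (b y - b x))"
  have 9: "(1/2) * DS S Jb - (1/2) * DS S Ja - k1 - k1 - rr \<le> X"
    using 3 4 5 unfolding k1_def rr_def X_def by simp
  have 10: "H = -(1/2) * X" using 1 2 unfolding X_def by simp
  have "H \<le> (1/2) * (DS S Ja - DS S Jb) + rr"
    using 9 10 8[folded k1_def] by argo
  then show ?thesis
    unfolding rr_def H_def v_def Ja_def Jb_def R_def B'_def \<phi>_def by simp
qed

definition Nb :: "'a set \<Rightarrow> real \<Rightarrow> ('a \<Rightarrow> real) \<Rightarrow> real" where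
  "Nb S R f = (\<Sum>x\<in>S. if x \<in> B R then m x * (f x)\<^sup>2 else 0)"

lemma Nb_nonneg: "0 \<le> Nb S R f"
  unfolding Nb_def by (intro sum_nonneg) (auto intro!: mult_nonneg_nonneg simp: less_imp_le[OF mpos])

lemma caccio:
  assumes S: "finite S" "B (r+L+s) \<subseteq> S" and L: "0 < L"
    and sol: "\<And>n x. n \<in> {1..T} \<Longrightarrow> U n x - U (n-1) x = laplacian E w m (U n) x"
  shows "(\<Sum>n\<in>{1..T}. real n * DS S (\<lambda>x y. if x \<in> B r then (U n y - U n x)\<^sup>2 else 0))
     \<le> 4 * (1 + 2 * real T / L\<^sup>2) * (\<Sum>n\<le>T. Nb S (r+L+s) (U n))"
proof -
  define F where "F n = (\<Sum>x\<in>S. m x * (cut r L x)\<^sup>2 * (U n x)\<^sup>2)" for n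
  define G where "G n = DS S (\<lambda>x y. if x \<in> B r then (U n y - U n x)\<^sup>2 else 0)" for n
  define N where "N n = Nb S (r+L+s) (U n)" for n
  have N0: "0 \<le> N n" for n unfolding N_def by (rule Nb_nonneg)
  have G0: "0 \<le> G n" for n unfolding G_def by (rule DS_nonneg) auto
  have FN: "F n \<le> N n" "0 \<le> F n" for n
  proof -
    show "F n \<le> N n" unfolding F_def N_def Nb_def
    proof (intro sum_mono)
      fix x
      show "m x * (cut r L x)\<^sup>2 * (U n x)\<^sup>2 \<le> (if x \<in> B (r+L+s) then m x * (U n x)\<^sup>2 else 0)"
      proof (cases "x \<in> B (r+L+s)")
        case True
        have "(cut r L x)\<^sup>2 \<le> 1" using cut_nn[of r L x] cut_le1[of r L x] by (simp add: power_le_one)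
        then have "m x * (cut r L x)\<^sup>2 * (U n x)\<^sup>2 \<le> m x * 1 * (U n x)\<^sup>2"
          using mpos[of x] by (intro mult_right_mono mult_left_mono) auto
        then show ?thesis using True by simp
      next
        case False
        then have "x \<notin> B (r+L)" using ball_mono[of "r+L" "r+L+s"] s0 by auto
        then show ?thesis using False cut_out[OF L] by simp
      qed
    qed
    show "0 \<le> F n" unfolding F_def
      by (intro sum_nonneg) (auto intro!: mult_nonneg_nonneg simp: less_imp_le[OF mpos])
  qed
  have step: "real n * (F n - F (n-1)) + real n * G n / 4 \<le> (2 * real T / L\<^sup>2) * N n" if n: "n \<in> {1..T}" for n
  proof -
    have e: "F n - F (n-1) + (1/4) * G n \<le> (2/L\<^sup>2) * N n"
      unfolding F_def G_def N_def Nb_def by (rule energy1[OF S L sol[OF n]])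
    have "real n * (F n - F (n-1)) + real n * G n / 4 = real n * (F n - F (n-1) + (1/4) * G n)"
      by (simp add: algebra_simps)
    also have "\<dots> \<le> real n * ((2/L\<^sup>2) * N n)"
      using e by (intro mult_left_mono) auto
    also have "\<dots> \<le> real T * ((2/L\<^sup>2) * N n)"
      using n N0[of n] by (intro mult_right_mono) auto
    finally show ?thesis by simp
  qed
  have "(\<Sum>n\<in>{1..T}. real n * (F n - F (n-1)) + real n * G n / 4) \<le> (\<Sum>n\<in>{1..T}. (2 * real T / L\<^sup>2) * N n)"
    by (rule sum_mono) (rule step)
  then have A: "(\<Sum>n\<in>{1..T}. real n * (F n - F (n-1))) + (\<Sum>n\<in>{1..T}. real n * G n) / 4
      \<le> (2 * real T / L\<^sup>2) * (\<Sum>n\<in>{1..T}. N n)"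
    by (simp add: sum.distrib sum_distrib_left sum_divide_distrib)
  have B1: "(\<Sum>n\<in>{1..T}. real n * (F n - F (n-1))) \<ge> - (\<Sum>n\<le>T. N n)"
  proof -
    have "(\<Sum>n<T. F n) \<le> (\<Sum>n<T. N n)" by (intro sum_mono FN)
    also have "\<dots> \<le> (\<Sum>n\<le>T. N n)" by (intro sum_mono2) (auto intro: N0)
    finally have "(\<Sum>n<T. F n) \<le> (\<Sum>n\<le>T. N n)" .
    moreover have "0 \<le> real T * F T" using FN(2) by simp
    ultimately show ?thesis unfolding abel1 by linarith
  qed
  have B2: "(\<Sum>n\<in>{1..T}. N n) \<le> (\<Sum>n\<le>T. N n)" by (intro sum_mono2) (auto intro: N0)
  have B3: "(2 * real T / L\<^sup>2) * (\<Sum>n\<in>{1..T}. N n) \<le> (2 * real T / L\<^sup>2) * (\<Sum>n\<le>T. N n)"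
    using B2 by (intro mult_left_mono) auto
  have "(\<Sum>n\<in>{1..T}. real n * G n) \<le> 4 * ((\<Sum>n\<le>T. N n) + (2 * real T / L\<^sup>2) * (\<Sum>n\<le>T. N n))"
    using A B1 B3 by argo
  also have "\<dots> = 4 * (1 + 2 * real T / L\<^sup>2) * (\<Sum>n\<le>T. N n)" by (simp add: algebra_simps)
  finally show ?thesis unfolding G_def N_def .
qed

lemma step_sum:
  assumes S: "finite S" "B (r+L+s+L+s) \<subseteq> S" and L: "0 < L"
    and sol: "\<And>n x. n \<in> {1..T} \<Longrightarrow> U n x - U (n-1) x = laplacian E w m (U n) x"
  shows "(\<Sum>n\<in>{1..T}. real n * (real n - 1) * (\<Sum>x\<in>B r. m x * (U n x - U (n-1) x)\<^sup>2))
     \<le> 4 * (1 + real T / L\<^sup>2) * (1 + 2 * real T / L\<^sup>2) * (\<Sum>n\<le>T. Nb S (r+L+s+L+s) (U n))"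
proof -
  have S1: "B (r+L+s) \<subseteq> S" using S(2) ball_mono[of "r+L+s" "r+L+s+L+s"] s0 L by auto
  define H where "H n = (\<Sum>x\<in>S. m x * (cut r L x)\<^sup>2 * (U n x - U (n-1) x)\<^sup>2)" for n
  define J where "J n = DS S (\<lambda>x y. cut r L x * cut r L y * (U n y - U n x)\<^sup>2)" for n
  define G where "G n = DS S (\<lambda>x y. if x \<in> B (r+L+s) then (U n y - U n x)\<^sup>2 else 0)" for n
  have G0: "0 \<le> G n" for n unfolding G_def by (rule DS_nonneg) auto
  have J0: "0 \<le> J n" for n unfolding J_def by (rule DS_nonneg) (auto intro!: mult_nonneg_nonneg cut_nn)
  have JG: "J n \<le> G n" for n unfolding J_def G_def
  proof (rule DS_mono)
    fix x y assume "E x y"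
    show "cut r L x * cut r L y * (U n y - U n x)\<^sup>2 \<le> (if x \<in> B (r+L+s) then (U n y - U n x)\<^sup>2 else 0)"
    proof (cases "x \<in> B (r+L+s)")
      case True
      have "cut r L x * cut r L y \<le> 1" using cut_nn[of r L x] cut_le1[of r L x] cut_nn[of r L y] cut_le1[of r L y]
        by (simp add: mult_le_one)
      then show ?thesis using True mult_right_mono[of "cut r L x * cut r L y" 1 "(U n y - U n x)\<^sup>2"] by simp
    next
      case False
      then have "x \<notin> B (r+L)" using ball_mono[of "r+L" "r+L+s"] s0 by auto
      then show ?thesis using False cut_out[OF L] by simp
    qed
  qed
  have HB: "(\<Sum>x\<in>B r. m x * (U n x - U (n-1) x)\<^sup>2) \<le> H n" for n
  proof -
    have Br: "B r \<subseteq> S" using S1 ball_mono[of r "r+L+s"] s0 L by auto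
    have "(\<Sum>x\<in>B r. m x * (U n x - U (n-1) x)\<^sup>2) = (\<Sum>x\<in>B r. m x * (cut r L x)\<^sup>2 * (U n x - U (n-1) x)\<^sup>2)"
      by (intro sum.cong) (auto simp: cut_in[OF L])
    also have "\<dots> \<le> H n" unfolding H_def using Br S(1)
      by (intro sum_mono2) (auto intro!: mult_nonneg_nonneg simp: less_imp_le[OF mpos])
    finally show ?thesis .
  qed
  have e2: "H n \<le> (1/2) * (J (n-1) - J n) + (1/L\<^sup>2) * G n" if n: "n \<in> {1..T}" for n
    unfolding H_def J_def G_def by (rule energy2[OF S(1) S1 L sol[OF n]])
  have step: "real n * (real n - 1) * (\<Sum>x\<in>B r. m x * (U n x - U (n-1) x)\<^sup>2)
      \<le> (1/2) * (real n * (real n - 1) * (J (n-1) - J n)) + (real T / L\<^sup>2) * (real n * G n)" if n: "n \<in> {1..T}" for n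
  proof -
    have nn: "0 \<le> real n * (real n - 1)" using n by auto
    have "real n * (real n - 1) * (\<Sum>x\<in>B r. m x * (U n x - U (n-1) x)\<^sup>2) \<le> real n * (real n - 1) * H n"
      using HB nn by (intro mult_left_mono) auto
    also have "\<dots> \<le> real n * (real n - 1) * ((1/2) * (J (n-1) - J n) + (1/L\<^sup>2) * G n)"
      using e2[OF n] nn by (intro mult_left_mono) auto
    also have "\<dots> = (1/2) * (real n * (real n - 1) * (J (n-1) - J n)) + (real n - 1) / L\<^sup>2 * (real n * G n)"
      by (simp add: field_simps)
    also have "\<dots> \<le> (1/2) * (real n * (real n - 1) * (J (n-1) - J n)) + (real T / L\<^sup>2) * (real n * G n)"
    proof -
      have "(real n - 1) / L\<^sup>2 \<le> real T / L\<^sup>2" using n by (intro divide_right_mono) auto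
      then show ?thesis using G0[of n] by (intro add_left_mono mult_right_mono) auto
    qed
    finally show ?thesis .
  qed
  have "(\<Sum>n\<in>{1..T}. real n * (real n - 1) * (\<Sum>x\<in>B r. m x * (U n x - U (n-1) x)\<^sup>2))
     \<le> (\<Sum>n\<in>{1..T}. (1/2) * (real n * (real n - 1) * (J (n-1) - J n)) + (real T / L\<^sup>2) * (real n * G n))"
    by (rule sum_mono) (rule step)
  also have "\<dots> = (1/2) * (\<Sum>n\<in>{1..T}. real n * (real n - 1) * (J (n-1) - J n)) + (real T / L\<^sup>2) * (\<Sum>n\<in>{1..T}. real n * G n)"
    by (simp add: sum.distrib sum_distrib_left)
  also have "(\<Sum>n\<in>{1..T}. real n * (real n - 1) * (J (n-1) - J n)) \<le> 2 * (\<Sum>n\<in>{1..T}. real n * G n)"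
  proof -
    have "(\<Sum>n<T. 2 * real n * J n) \<le> (\<Sum>n\<le>T. 2 * real n * G n)"
    proof -
      have "(\<Sum>n<T. 2 * real n * J n) \<le> (\<Sum>n<T. 2 * real n * G n)"
        by (intro sum_mono mult_left_mono JG) auto
      also have "\<dots> \<le> (\<Sum>n\<le>T. 2 * real n * G n)"
        by (intro sum_mono2) (auto intro!: mult_nonneg_nonneg G0)
      finally show ?thesis .
    qed
    also have "\<dots> = 2 * (\<Sum>n\<in>{1..T}. real n * G n)"
      using sum_from1[where T=T and f="\<lambda>n. 2 * G n"] by (simp add: sum_distrib_left algebra_simps)
    finally have a: "(\<Sum>n<T. 2 * real n * J n) \<le> 2 * (\<Sum>n\<in>{1..T}. real n * G n)" .
    have b: "0 \<le> real T * (real T - 1) * J T"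
    proof (cases T)
      case 0 then show ?thesis by simp
    next
      case (Suc k) then show ?thesis using J0[of T] by simp
    qed
    show ?thesis unfolding abel2 using a b by linarith
  qed
  then have "(1/2) * (\<Sum>n\<in>{1..T}. real n * (real n - 1) * (J (n-1) - J n)) + (real T / L\<^sup>2) * (\<Sum>n\<in>{1..T}. real n * G n)
      \<le> (1 + real T / L\<^sup>2) * (\<Sum>n\<in>{1..T}. real n * G n)"
    by (simp add: algebra_simps)
  also have "\<dots> \<le> (1 + real T / L\<^sup>2) * (4 * (1 + 2 * real T / L\<^sup>2) * (\<Sum>n\<le>T. Nb S (r+L+s+L+s) (U n)))"
  proof -
    have c: "(\<Sum>n\<in>{1..T}. real n * G n) \<le> 4 * (1 + 2 * real T / L\<^sup>2) * (\<Sum>n\<le>T. Nb S (r+L+s+L+s) (U n))"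
      unfolding G_def by (rule caccio[where r="r+L+s" and U=U and T=T]) (use S L sol in auto)
    show ?thesis by (intro mult_left_mono c) (simp add: add_nonneg_nonneg)
  qed
  also have "\<dots> = 4 * (1 + real T / L\<^sup>2) * (1 + 2 * real T / L\<^sup>2) * (\<Sum>n\<le>T. Nb S (r+L+s+L+s) (U n))"
    by (simp only: mult_ac)
  finally show ?thesis .
qed

lemma lap_diff: "laplacian E w m (\<lambda>y. f y - g y) x = laplacian E w m f x - laplacian E w m g x"
  unfolding laplacian_def sum_subtractf[symmetric] by (intro sum.cong refl) (simp add: right_diff_distrib)

lemma anc_Dt: "ancient_solution E w m h \<Longrightarrow> ancient_solution E w m (Dt h)"
  unfolding ancient_solution_def
proof (intro allI impI)
  fix x and t :: int
  assume a: "\<forall>x. \<forall>t\<le>0. Dt h x t = laplacian E w m (\<lambda>y. h y t) x" and t: "t \<le> 0"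
  have "Dt (Dt h) x t = Dt h x t - Dt h x (t - 1)" by (simp add: Dt_def)
  also have "\<dots> = laplacian E w m (\<lambda>y. h y t) x - laplacian E w m (\<lambda>y. h y (t-1)) x"
    using a t by simp
  also have "\<dots> = laplacian E w m (\<lambda>y. Dt h y t) x"
    unfolding Dt_def by (rule lap_diff[symmetric])
  finally show "Dt (Dt h) x t = laplacian E w m (\<lambda>y. Dt h y t) x" .
qed

lemma anc_Dt_pow: "ancient_solution E w m h \<Longrightarrow> ancient_solution E w m ((Dt ^^ j) h)"
  by (induction j) (auto intro: anc_Dt)

definition Q :: "('a \<Rightarrow> int \<Rightarrow> real) \<Rightarrow> real \<Rightarrow> nat \<Rightarrow> real" where
  "Q h r T = (\<Sum>t\<in>{- int T..0}. \<Sum>x\<in>B r. m x * (h x t)\<^sup>2)"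

lemma Q_nonneg: "0 \<le> Q h r T"
  unfolding Q_def by (intro sum_nonneg) (auto intro!: mult_nonneg_nonneg simp: less_imp_le[OF mpos])

lemma Q_mono: assumes "r \<le> r'" "T \<le> T'" shows "Q h r T \<le> Q h r' T'"
proof -
  have "Q h r T \<le> (\<Sum>t\<in>{- int T..0}. \<Sum>x\<in>B r'. m x * (h x t)\<^sup>2)"
    unfolding Q_def using assms(1) finB
    by (intro sum_mono sum_mono2) (auto intro!: mult_nonneg_nonneg simp: less_imp_le[OF mpos] ball_def)
  also have "\<dots> \<le> Q h r' T'"
    unfolding Q_def using assms(2)
    by (intro sum_mono2) (auto intro!: sum_nonneg mult_nonneg_nonneg simp: less_imp_le[OF mpos])
  finally show ?thesis .
qed

lemma Q_point: "x \<in> B r \<Longrightarrow> - int T \<le> t \<Longrightarrow> t \<le> 0 \<Longrightarrow> m x * (h x t)\<^sup>2 \<le> Q h r T"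
proof -
  assume a: "x \<in> B r" "- int T \<le> t" "t \<le> 0"
  have "m x * (h x t)\<^sup>2 \<le> (\<Sum>x\<in>B r. m x * (h x t)\<^sup>2)"
    using a finB by (intro member_le_sum) (auto intro!: mult_nonneg_nonneg simp: less_imp_le[OF mpos])
  also have "\<dots> \<le> Q h r T" unfolding Q_def using a
    by (intro member_le_sum[where f="\<lambda>t. \<Sum>x\<in>B r. m x * (h x t)\<^sup>2"])
       (auto intro!: sum_nonneg mult_nonneg_nonneg simp: less_imp_le[OF mpos])
  finally show ?thesis .
qed

lemma step_anc:
  assumes anc: "ancient_solution E w m h" and T: "1 \<le> T" and L: "0 < L" "s \<le> L"
    and TL: "2 * real T + 1 \<le> L\<^sup>2"
  shows "(real T)\<^sup>2 * Q (Dt h) r T \<le> 24 * Q h (r + 4 * L) (4 * T)"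
proof -
  define N where "N = 2 * T + 1"
  define U where "U n x = h x (int n - int N)" for n x
  define R' where "R' = r+L+s+L+s"
  define S where "S = B R'"
  have S: "finite S" "B (r+L+s+L+s) \<subseteq> S" unfolding S_def R'_def using finB by auto
  have sol: "U n x - U (n-1) x = laplacian E w m (U n) x" if n: "n \<in> {1..N}" for n x
  proof -
    have e: "int (n - 1) - int N = (int n - int N) - 1" using n by auto
    have t: "int n - int N \<le> 0" using n by auto
    have "U n x - U (n-1) x = Dt h x (int n - int N)" unfolding U_def Dt_def e ..
    also have "\<dots> = laplacian E w m (U n) x" using anc t unfolding ancient_solution_def U_def by auto
    finally show ?thesis .
  qed
  have main: "(\<Sum>n\<in>{1..N}. real n * (real n - 1) * (\<Sum>x\<in>B r. m x * (U n x - U (n-1) x)\<^sup>2))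
     \<le> 4 * (1 + real N / L\<^sup>2) * (1 + 2 * real N / L\<^sup>2) * (\<Sum>n\<le>N. Nb S (r+L+s+L+s) (U n))"
    by (rule step_sum[where U=U and T=N, OF S L(1) sol])
  have NL: "real N / L\<^sup>2 \<le> 1" using TL L unfolding N_def by simp
  have c: "4 * (1 + real N / L\<^sup>2) * (1 + 2 * real N / L\<^sup>2) \<le> 24"
  proof -
    have "0 \<le> real N / L\<^sup>2" by simp
    then have "(1 + real N / L\<^sup>2) * (1 + 2 * real N / L\<^sup>2) \<le> 2 * 3"
      using NL by (intro mult_mono) auto
    then show ?thesis by (simp only: mult.assoc)
  qed
  have Nb0: "0 \<le> (\<Sum>n\<le>N. Nb S (r+L+s+L+s) (U n))" by (intro sum_nonneg Nb_nonneg)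
  have rhs: "(\<Sum>n\<le>N. Nb S (r+L+s+L+s) (U n)) = Q h R' N"
  proof -
    have "(\<Sum>n\<le>N. Nb S (r+L+s+L+s) (U n)) = (\<Sum>n\<in>{0..N}. (\<lambda>t. \<Sum>x\<in>B R'. m x * (h x t)\<^sup>2) (int n - int N))"
      unfolding Nb_def S_def R'_def U_def atMost_atLeast0 by (intro sum.cong refl) auto
    also have "\<dots> = Q h R' N" unfolding Q_def by (subst reidx) auto
    finally show ?thesis .
  qed
  have lhs: "(real T)\<^sup>2 * Q (Dt h) r T \<le> (\<Sum>n\<in>{1..N}. real n * (real n - 1) * (\<Sum>x\<in>B r. m x * (U n x - U (n-1) x)\<^sup>2))"
  proof -
    have "Q (Dt h) r T = (\<Sum>n\<in>{T+1..N}. (\<lambda>t. \<Sum>x\<in>B r. m x * (Dt h x t)\<^sup>2) (int n - int N))"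
      unfolding Q_def by (subst reidx) (auto simp: N_def)
    also have "\<dots> = (\<Sum>n\<in>{T+1..N}. \<Sum>x\<in>B r. m x * (U n x - U (n-1) x)\<^sup>2)"
      by (intro sum.cong refl) (auto simp: U_def Dt_def of_nat_diff algebra_simps)
    finally have q: "(real T)\<^sup>2 * Q (Dt h) r T = (\<Sum>n\<in>{T+1..N}. (real T)\<^sup>2 * (\<Sum>x\<in>B r. m x * (U n x - U (n-1) x)\<^sup>2))"
      by (simp add: sum_distrib_left)
    also have "\<dots> \<le> (\<Sum>n\<in>{T+1..N}. real n * (real n - 1) * (\<Sum>x\<in>B r. m x * (U n x - U (n-1) x)\<^sup>2))"
    proof (intro sum_mono mult_right_mono)
      fix n assume n: "n \<in> {T+1..N}"
      then have "real T \<le> real n - 1" "real T \<le> real n" by auto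
      then show "(real T)\<^sup>2 \<le> real n * (real n - 1)"
        unfolding power2_eq_square using T by (intro mult_mono) auto
    qed (auto intro!: sum_nonneg mult_nonneg_nonneg simp: less_imp_le[OF mpos])
    also have "\<dots> \<le> (\<Sum>n\<in>{1..N}. real n * (real n - 1) * (\<Sum>x\<in>B r. m x * (U n x - U (n-1) x)\<^sup>2))"
      by (intro sum_mono2) (auto intro!: sum_nonneg mult_nonneg_nonneg simp: less_imp_le[OF mpos])
    finally show ?thesis .
  qed
  have "(real T)\<^sup>2 * Q (Dt h) r T \<le> 24 * Q h R' N"
    using lhs main mult_right_mono[OF c Nb0] rhs by linarith
  also have "\<dots> \<le> 24 * Q h (r + 4 * L) (4 * T)"
    using L T unfolding R'_def N_def by (intro mult_left_mono Q_mono) auto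
  finally show ?thesis .
qed

lemma iter:
  assumes "1 \<le> T" "0 < L" "s \<le> L" "2 * 4 ^ j * real T + 1 \<le> L\<^sup>2"
  shows "ancient_solution E w m h \<Longrightarrow>
    (real T) ^ (2 * j) * Q ((Dt ^^ j) h) r T \<le> 24 ^ j * Q h (r + 4 * real j * L) (4 ^ j * T)"
  using assms(4)
proof (induction j arbitrary: h)
  case 0 then show ?case by simp
next
  case (Suc j)
  have c: "2 * 4 ^ j * real T + 1 \<le> L\<^sup>2"
  proof -
    have "2 * 4 ^ j * real T \<le> 2 * 4 ^ Suc j * real T" by simp
    then show ?thesis using Suc.prems(2) by linarith
  qed
  have ih: "(real T) ^ (2 * j) * Q ((Dt ^^ j) (Dt h)) r T \<le> 24 ^ j * Q (Dt h) (r + 4 * real j * L) (4 ^ j * T)"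
    using Suc.IH[OF anc_Dt[OF Suc.prems(1)] c] .
  have T1: "1 \<le> 4 ^ j * T" using assms(1) by simp
  have st: "(real (4 ^ j * T))\<^sup>2 * Q (Dt h) (r + 4 * real j * L) (4 ^ j * T)
      \<le> 24 * Q h (r + 4 * real j * L + 4 * L) (4 * (4 ^ j * T))"
    by (rule step_anc[OF Suc.prems(1) T1 assms(2,3)]) (use c in simp)
  have TT: "(real T)\<^sup>2 \<le> (real (4 ^ j * T))\<^sup>2"
  proof (intro power_mono)
    have "real T * 1 \<le> real T * 4 ^ j" by (intro mult_left_mono) auto
    then show "real T \<le> real (4 ^ j * T)" by (simp add: mult_ac)
  qed auto
  have "(real T) ^ (2 * Suc j) * Q ((Dt ^^ Suc j) h) r T = (real T)\<^sup>2 * ((real T) ^ (2 * j) * Q ((Dt ^^ j) (Dt h)) r T)"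
    by (simp add: funpow_Suc_right power_add power_mult mult_ac power2_eq_square del: funpow.simps)
  also have "\<dots> \<le> (real T)\<^sup>2 * (24 ^ j * Q (Dt h) (r + 4 * real j * L) (4 ^ j * T))"
    using ih by (intro mult_left_mono) auto
  also have "\<dots> \<le> 24 ^ j * ((real (4 ^ j * T))\<^sup>2 * Q (Dt h) (r + 4 * real j * L) (4 ^ j * T))"
  proof -
    have "(real T)\<^sup>2 * (24 ^ j * Q (Dt h) (r + 4 * real j * L) (4 ^ j * T))
        = 24 ^ j * ((real T)\<^sup>2 * Q (Dt h) (r + 4 * real j * L) (4 ^ j * T))" by (simp only: mult_ac)
    also have "\<dots> \<le> 24 ^ j * ((real (4 ^ j * T))\<^sup>2 * Q (Dt h) (r + 4 * real j * L) (4 ^ j * T))"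
      by (intro mult_left_mono mult_right_mono TT Q_nonneg) auto
    finally show ?thesis .
  qed
  also have "\<dots> \<le> 24 ^ j * (24 * Q h (r + 4 * real j * L + 4 * L) (4 * (4 ^ j * T)))"
    using st by (intro mult_left_mono) auto
  also have "\<dots> = 24 ^ Suc j * Q h (r + 4 * real (Suc j) * L) (4 ^ Suc j * T)"
    by (simp add: algebra_simps)
  finally show ?case .
qed

lemma Q_bound:
  assumes bnd: "\<forall>R>0. \<forall>y\<in>ball \<rho> x1 R. \<forall>t::int. - (R\<^sup>2) \<le> real_of_int t \<and> t \<le> 0 \<longrightarrow> \<bar>u y t\<bar> \<le> Cu * (1 + R) powr k"
    and vol: "\<forall>R>0. sum m (B R) \<le> C * (1 + R) powr \<alpha>"
    and R: "0 < R" "real N \<le> R\<^sup>2"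
  shows "Q u R N \<le> (real N + 1) * (C * (1 + R) powr \<alpha>) * (Cu * (1 + (R + \<rho> x0 x1)) powr k)\<^sup>2"
proof -
  define Bd where "Bd = Cu * (1 + (R + \<rho> x0 x1)) powr k"
  have pt: "(u y t)\<^sup>2 \<le> Bd\<^sup>2" if y: "y \<in> B R" and t: "t \<in> {- int N..0}" for y t
  proof -
    have d0: "0 \<le> \<rho> x0 x1" by (rule rnn)
    have "\<rho> y x1 \<le> \<rho> y x0 + \<rho> x0 x1" by (rule rtri)
    then have yb: "y \<in> ball \<rho> x1 (R + \<rho> x0 x1)" using y unfolding ball_def by auto
    have "R\<^sup>2 \<le> (R + \<rho> x0 x1)\<^sup>2" using R d0 by (intro power_mono) auto
    then have tt: "- ((R + \<rho> x0 x1)\<^sup>2) \<le> real_of_int t" "t \<le> 0" using t R by auto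
    have "\<bar>u y t\<bar> \<le> Bd" unfolding Bd_def using bnd yb tt R d0
      by (metis add_pos_nonneg)
    then have "\<bar>u y t\<bar>\<^sup>2 \<le> Bd\<^sup>2" by (intro power_mono) auto
    then show ?thesis by simp
  qed
  have "Q u R N \<le> (\<Sum>t\<in>{- int N..0}. \<Sum>y\<in>B R. m y * Bd\<^sup>2)"
    unfolding Q_def by (intro sum_mono mult_left_mono pt) (auto simp: less_imp_le[OF mpos])
  also have "\<dots> = (real N + 1) * (Bd\<^sup>2 * sum m (B R))"
    by (simp add: sum_distrib_right[symmetric] mult_ac)
  also have "\<dots> \<le> (real N + 1) * (Bd\<^sup>2 * (C * (1 + R) powr \<alpha>))"
    using vol R by (intro mult_left_mono) auto
  finally show ?thesis unfolding Bd_def by (simp add: mult_ac)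
qed

lemma main_vanish:
  assumes anc: "ancient_solution E w m u"
    and bnd: "\<forall>R>0. \<forall>y\<in>ball \<rho> x1 R. \<forall>t::int. - (R\<^sup>2) \<le> real_of_int t \<and> t \<le> 0 \<longrightarrow> \<bar>u y t\<bar> \<le> Cu * (1 + R) powr k"
    and vol: "\<forall>R>0. sum m (B R) \<le> C * (1 + R) powr \<alpha>"
    and k: "0 < k" and q: "4 * real q > 2 * k + \<alpha> + 2" and t: "t \<le> 0"
  shows "(Dt ^^ q) u x t = 0"
proof -
  define a where "a = (Dt ^^ q) u x t"
  define d where "d = \<rho> x0 x1"
  define c :: real where "c = (1 + 4 * real q) * 2 ^ (q + 1)"
  have d0: "0 \<le> d" unfolding d_def by (rule rnn)
  have c1: "1 \<le> c"
  proof -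
    have "(1::real) \<le> 2 ^ (q + 1)" by (rule one_le_power) simp
    moreover have "1 \<le> 1 + 4 * real q" by simp
    ultimately show ?thesis unfolding c_def using mult_mono[of 1 "1 + 4 * real q" 1 "2 ^ (q + 1)"] by simp
  qed
  have Cu0: "0 \<le> Cu"
  proof -
    have "x1 \<in> ball \<rho> x1 1" unfolding ball_def by (simp add: rrefl)
    then have "\<bar>u x1 0\<bar> \<le> Cu * (1 + 1) powr k" using bnd by force
    moreover have "0 < (1 + 1 :: real) powr k" by simp
    ultimately show ?thesis by (metis abs_ge_zero order_trans zero_le_mult_iff not_less less_imp_le)
  qed
  have C0: "0 \<le> C"
  proof -
    have "0 \<le> sum m (B 1)" by (intro sum_nonneg) (auto simp: less_imp_le[OF mpos])
    also have "\<dots> \<le> C * (1 + 1) powr \<alpha>" using vol[rule_format, of 1] by simp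
    finally show ?thesis by (simp add: zero_le_mult_iff)
  qed
  define K1 where "K1 = max 1 ((1 + c) powr \<alpha>)"
  define K2 where "K2 = (1 + c + d) powr k"
  define K where "K = 24 ^ q * (4 ^ q + 1) * C * K1 * Cu\<^sup>2 * K2\<^sup>2"
  define e where "e = 2 + \<alpha> + 2 * k - 4 * real q"
  have e: "e < 0" using q unfolding e_def by simp
  define N0 where "N0 = max 1 (max (nat (- t)) (max (nat \<lceil>s\<rceil>) (nat \<lceil>\<rho> x x0\<rceil>)))"
  have bound: "m x * a\<^sup>2 \<le> K * real n powr e" if n: "N0 \<le> n" for n
  proof -
    define rn where "rn = real n"
    have rn1: "1 \<le> rn" using n unfolding rn_def N0_def by simp
    have rnt: "- t \<le> int n" using n unfolding N0_def by (simp add: nat_le_iff)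
    have rns: "s \<le> rn" using n unfolding rn_def N0_def by linarith
    have rnx: "\<rho> x x0 \<le> rn" using n unfolding rn_def N0_def by linarith
    define L where "L = 2 ^ (q + 1) * rn"
    define T where "T = n\<^sup>2"
    have p2: "(1::real) \<le> 2 ^ (q + 1)" by (rule one_le_power) simp
    have Lrn: "rn \<le> L" unfolding L_def using mult_right_mono[OF p2, of rn] rn1 by simp
    have L0: "0 < L" using Lrn rn1 by simp
    have LL: "L\<^sup>2 = 4 * 4 ^ q * rn\<^sup>2"
    proof -
      have "((2::real) ^ (q + 1))\<^sup>2 = 4 * 4 ^ q"
        by (simp add: power_mult_distrib[symmetric] power2_eq_square power_add[symmetric] power_mult[symmetric])
      then show ?thesis unfolding L_def by (simp add: power_mult_distrib)
    qed
    have rT: "real T = rn\<^sup>2" unfolding T_def rn_def by simp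
    have T1: "1 \<le> T" using rn1 unfolding T_def rn_def by simp
    have cond: "2 * 4 ^ q * real T + 1 \<le> L\<^sup>2"
    proof -
      have a1: "(1::real) \<le> 4 ^ q" by (rule one_le_power) simp
      have a2: "1 \<le> rn\<^sup>2" using rn1 by (rule one_le_power)
      have "1 * 1 \<le> 4 ^ q * rn\<^sup>2" using a1 a2 by (intro mult_mono) auto
      then have "1 \<le> 4 ^ q * rn\<^sup>2" by simp
      then show ?thesis unfolding LL rT by (simp add: mult_ac)
    qed
    have it: "(real T) ^ (2 * q) * Q ((Dt ^^ q) u) L T \<le> 24 ^ q * Q u (L + 4 * real q * L) (4 ^ q * T)"
      by (rule iter[OF T1 L0 _ cond anc]) (use rns Lrn in linarith)
    have pt: "m x * a\<^sup>2 \<le> Q ((Dt ^^ q) u) L T"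
      unfolding a_def
    proof (rule Q_point)
      show "x \<in> B L" using rnx Lrn unfolding ball_def by simp
      have "int n \<le> int T" unfolding T_def using rn1 unfolding rn_def by (simp add: power2_eq_square)
      then show "- int T \<le> t" using rnt by linarith
    qed (rule t)
    define R' where "R' = c * rn"
    have R'eq: "L + 4 * real q * L = R'" unfolding R'_def L_def c_def by (simp add: algebra_simps)
    have R'0: "0 < R'" unfolding R'_def using c1 rn1 by simp
    have NR: "real (4 ^ q * T) \<le> R'\<^sup>2"
    proof -
      have "real (4 ^ q * T) = 4 ^ q * rn\<^sup>2" using rT by simp
      also have "\<dots> \<le> 4 * 4 ^ q * rn\<^sup>2" by simp
      also have "\<dots> = L\<^sup>2" using LL by simp
      finally have "real (4 ^ q * T) \<le> L\<^sup>2" .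
      also have "\<dots> \<le> R'\<^sup>2" unfolding R'eq[symmetric] using L0 by (intro power_mono) auto
      finally show ?thesis .
    qed
    have qb: "Q u R' (4 ^ q * T) \<le> (real (4 ^ q * T) + 1) * (C * (1 + R') powr \<alpha>) * (Cu * (1 + (R' + d)) powr k)\<^sup>2"
      unfolding d_def by (rule Q_bound[OF bnd vol R'0 NR])
    have main: "m x * a\<^sup>2 * rn ^ (4 * q) \<le> 24 ^ q * ((real (4 ^ q * T) + 1) * (C * (1 + R') powr \<alpha>) * (Cu * (1 + (R' + d)) powr k)\<^sup>2)"
    proof -
      have "m x * a\<^sup>2 * rn ^ (4 * q) = rn ^ (4 * q) * (m x * a\<^sup>2)" by simp
      also have "\<dots> \<le> (real T) ^ (2 * q) * Q ((Dt ^^ q) u) L T"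
      proof -
        have "rn\<^sup>2 ^ (2 * q) = rn ^ (4 * q)" by (simp add: power_mult[symmetric])
        then show ?thesis unfolding rT using pt rn1 by (simp add: mult_left_mono)
      qed
      also have "\<dots> \<le> 24 ^ q * Q u R' (4 ^ q * T)" using it R'eq by simp
      also have "\<dots> \<le> 24 ^ q * ((real (4 ^ q * T) + 1) * (C * (1 + R') powr \<alpha>) * (Cu * (1 + (R' + d)) powr k)\<^sup>2)"
        using qb by (intro mult_left_mono) auto
      finally show ?thesis .
    qed
    have f1: "real (4 ^ q * T) + 1 \<le> (4 ^ q + 1) * rn powr 2"
    proof -
      have "rn powr 2 = rn\<^sup>2" using rn1 by simp
      moreover have "1 \<le> rn\<^sup>2" using rn1 by (rule one_le_power)
      ultimately show ?thesis unfolding rT[symmetric] using rT by (simp add: algebra_simps)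
    qed
    have f2: "C * (1 + R') powr \<alpha> \<le> C * K1 * rn powr \<alpha>"
      unfolding R'_def K1_def mult.assoc using powr_bound1[OF rn1 c1, of \<alpha>] C0 by (intro mult_left_mono) (auto simp: mult.commute)
    have f3: "(Cu * (1 + (R' + d)) powr k)\<^sup>2 \<le> Cu\<^sup>2 * K2\<^sup>2 * rn powr (2 * k)"
    proof -
      have "(1 + (R' + d)) powr k \<le> K2 * rn powr k"
        unfolding R'_def K2_def using powr_bound2[OF rn1 _ d0, of c k] c1 k by (simp add: add.assoc)
      then have "Cu * (1 + (R' + d)) powr k \<le> Cu * (K2 * rn powr k)" using Cu0 by (intro mult_left_mono)
      then have "(Cu * (1 + (R' + d)) powr k)\<^sup>2 \<le> (Cu * (K2 * rn powr k))\<^sup>2" using Cu0 by (intro power_mono) auto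
      also have "\<dots> = Cu\<^sup>2 * K2\<^sup>2 * rn powr (2 * k)"
        using rn1 by (simp add: power_mult_distrib powr_add[symmetric] power2_eq_square)
      finally show ?thesis .
    qed
    have nn1: "0 \<le> C * (1 + R') powr \<alpha>" using C0 by simp
    have nn2: "0 \<le> (Cu * (1 + (R' + d)) powr k)\<^sup>2" by simp
    have "(real (4 ^ q * T) + 1) * (C * (1 + R') powr \<alpha>) * (Cu * (1 + (R' + d)) powr k)\<^sup>2
        \<le> ((4 ^ q + 1) * rn powr 2) * (C * K1 * rn powr \<alpha>) * (Cu\<^sup>2 * K2\<^sup>2 * rn powr (2 * k))"
    proof -
      have K10: "0 \<le> K1" unfolding K1_def by simp
      have b1: "0 \<le> (4 ^ q + 1) * rn powr 2" by simp
      have b2: "0 \<le> C * K1 * rn powr \<alpha>" using C0 K10 by simp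
      have s1: "(real (4 ^ q * T) + 1) * (C * (1 + R') powr \<alpha>) \<le> ((4 ^ q + 1) * rn powr 2) * (C * K1 * rn powr \<alpha>)"
        by (rule mult_mono[OF f1 f2 b1 nn1])
      show ?thesis
        by (rule mult_mono[OF s1 f3]) (use b1 b2 nn2 in auto)
    qed
    also have "\<dots> = (4 ^ q + 1) * C * K1 * Cu\<^sup>2 * K2\<^sup>2 * rn powr (2 + \<alpha> + 2 * k)"
      by (simp add: powr_add mult_ac)
    finally have "m x * a\<^sup>2 * rn ^ (4 * q) \<le> K * rn powr (2 + \<alpha> + 2 * k)"
      using main unfolding K_def by (smt (verit) mult_left_mono mult.assoc zero_le_power)
    moreover have "rn ^ (4 * q) = rn powr (4 * real q)"
    proof -
      have "rn powr real (4 * q) = rn ^ (4 * q)" using rn1 by (intro powr_realpow) simp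
      then show ?thesis by simp
    qed
    moreover have "rn powr (2 + \<alpha> + 2 * k) = rn powr e * rn powr (4 * real q)"
      unfolding e_def by (simp add: powr_add[symmetric])
    moreover have "0 < rn powr (4 * real q)" using rn1 by simp
    ultimately have "m x * a\<^sup>2 * rn powr (4 * real q) \<le> (K * rn powr e) * rn powr (4 * real q)"
      by (simp add: mult_ac)
    then show ?thesis unfolding rn_def using \<open>0 < rn powr (4 * real q)\<close> unfolding rn_def
      by (simp add: mult_le_cancel_right)
  qed
  have lim: "(\<lambda>n. K * real n powr e) \<longlonglongrightarrow> 0"
    using tendsto_mult_right_zero[OF tendsto_neg_powr[OF e filterlim_real_sequentially]] by simp
  have "m x * a\<^sup>2 \<le> 0"
    using LIMSEQ_le_const[OF lim] bound by blast
  moreover have "0 < m x" by (rule mpos)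
  ultimately have "a\<^sup>2 \<le> 0" by (simp add: mult_le_0_iff)
  then show ?thesis unfolding a_def by simp
qed

end

theorem corollary4p3:
  fixes E :: "'a \<Rightarrow> 'a \<Rightarrow> bool" and w :: "'a \<Rightarrow> 'a \<Rightarrow> real" and m :: "'a \<Rightarrow> real"
    and \<rho> :: "'a \<Rightarrow> 'a \<Rightarrow> real" and k \<alpha> C :: real and x0 :: 'a
    and u :: "'a \<Rightarrow> int \<Rightarrow> real" and q :: nat
  assumes G: "weighted_graph E w m"
    and intr: "intrinsic_metric E w m \<rho>"
    and fin_balls: "\<forall>x R. finite (ball \<rho> x R)"
    and jump: "\<exists>s. \<forall>x y. E x y \<longrightarrow> \<rho> x y \<le> s"
    and vol: "\<forall>R>0. sum m (ball \<rho> x0 R) \<le> C * (1 + R) powr \<alpha>"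
    and k: "k > 0"
    and u: "u \<in> P_tilde E w m \<rho> k"
    and q: "4 * real q > 2 * k + \<alpha> + 2"
  shows "(\<forall>x. \<forall>t\<le>0. ((Dt ^^ q) u) x t = 0) \<and>
         (\<exists>p :: nat \<Rightarrow> 'a \<Rightarrow> real. \<forall>x. \<forall>t\<le>0.
            u x t = (\<Sum>i<q. p i x * real (nat (- t) choose i)))"
proof -
  obtain s where sj: "\<forall>x y. E x y \<longrightarrow> \<rho> x y \<le> s" using jump by blast
  have GG: "(\<forall>x y. E x y \<longrightarrow> E y x) \<and> (\<forall>x. \<not> E x x) \<and> (\<forall>x. finite {y. E x y}) \<and>
     (\<forall>x y. (E\<^sup>*\<^sup>*) x y) \<and> (\<forall>x y. E x y \<longrightarrow> w x y > 0 \<and> w x y = w y x) \<and> (\<forall>x. m x > 0)"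
    using G unfolding weighted_graph_def .
  have g1: "\<forall>x y. E x y \<longrightarrow> E y x" using GG by (rule conjunct1)
  have g3: "\<forall>x. finite {y. E x y}" using GG[THEN conjunct2, THEN conjunct2] by (rule conjunct1)
  have g5: "\<forall>x y. E x y \<longrightarrow> w x y > 0 \<and> w x y = w y x"
    using GG[THEN conjunct2, THEN conjunct2, THEN conjunct2, THEN conjunct2] by (rule conjunct1)
  have g6: "\<forall>x. m x > 0"
    using GG[THEN conjunct2, THEN conjunct2, THEN conjunct2, THEN conjunct2] by (rule conjunct2)
  have II: "pseudometric \<rho> \<and> (\<forall>x. (\<Sum>y\<in>{y. E x y}. w x y * (\<rho> x y)\<^sup>2) \<le> m x)"
    using intr unfolding intrinsic_metric_def .
  have PP: "(\<forall>x y. \<rho> x y \<ge> 0) \<and> (\<forall>x. \<rho> x x = 0) \<and> (\<forall>x y. \<rho> x y = \<rho> y x) \<and> (\<forall>x y z. \<rho> x z \<le> \<rho> x y + \<rho> y z)"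
    using II[THEN conjunct1] unfolding pseudometric_def .
  interpret W: wg E w m \<rho> x0 "max s 0"
  proof
    fix x y z :: 'a and r :: real
    show "E x y \<Longrightarrow> E y x" using g1 by blast
    show "finite {y. E x y}" using g3 by blast
    show "E x y \<Longrightarrow> 0 < w x y" using g5 by blast
    show "E x y \<Longrightarrow> w x y = w y x" using g5 by blast
    show "0 < m x" using g6 by blast
    show "0 \<le> \<rho> x y" using PP by blast
    show "\<rho> x x = 0" using PP by blast
    show "\<rho> x y = \<rho> y x" using PP by blast
    show "\<rho> x z \<le> \<rho> x y + \<rho> y z" using PP by blast
    show "(\<Sum>y\<in>{y. E x y}. w x y * (\<rho> x y)\<^sup>2) \<le> m x" using II by blast
    show "finite (ball \<rho> x r)" using fin_balls by blast
    show "0 \<le> max s 0" by simp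
    show "E x y \<Longrightarrow> \<rho> x y \<le> max s 0" using sj by fastforce
  qed
  have anc: "ancient_solution E w m u" using u unfolding P_tilde_def by blast
  obtain x1 Cu where bnd: "\<forall>R>0. \<forall>y\<in>ball \<rho> x1 R. \<forall>t::int. - (R\<^sup>2) \<le> real_of_int t \<and> t \<le> 0 \<longrightarrow> \<bar>u y t\<bar> \<le> Cu * (1 + R) powr k"
    using u unfolding P_tilde_def by blast
  have van: "\<forall>x. \<forall>t\<le>0. ((Dt ^^ q) u) x t = 0"
  proof (intro allI impI)
    fix x and t :: int assume "t \<le> 0"
    then show "((Dt ^^ q) u) x t = 0" by (rule W.main_vanish[OF anc bnd vol k q])
  qed
  have ex: "\<forall>x. \<exists>c::nat\<Rightarrow>real. \<forall>t\<le>0. u x t = (\<Sum>i<q. c i * real (nat (- t) choose i))"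
  proof
    fix x
    have "\<forall>t\<le>0. (Dt ^^ q) u x t = 0" using van by blast
    then show "\<exists>c::nat\<Rightarrow>real. \<forall>t\<le>0. u x t = (\<Sum>i<q. c i * real (nat (- t) choose i))"
      by (rule poly_rep)
  qed
  obtain cf where cf: "\<forall>x. \<forall>t\<le>0. u x t = (\<Sum>i<q. cf x i * real (nat (- t) choose i))"
    using choice[OF ex] by blast
  show ?thesis
  proof (intro conjI van exI[of _ "\<lambda>i x. cf x i"])
    show "\<forall>x. \<forall>t\<le>0. u x t = (\<Sum>i<q. (\<lambda>i x. cf x i) i x * real (nat (- t) choose i))"
      using cf by simp
  qed
qed

end
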